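(* Let $\mathcal A$ be an additive category and let $\mathcal J_1,\mathcal J_2$ be ideals of $\mathcal A$. If $\mathcal J_1$ and $\mathcal J_2$ are both preenveloping, then so is $\mathcal J_1+\mathcal J_2$. Likewise, if $\mathcal J_1$ and $\mathcal J_2$ are both precovering, then so is $\mathcal J_1+\mathcal J_2$.
   Context: An ideal $\mathcal J$ of an additive category $\mathcal A$ assigns to each pair of objects $(A,B)$ a subgroup $\mathcal J(A,B)\subseteq \mathrm{Hom}(A,B)$ such that $fgh\in\mathcal J$ whenever $g\in\mathcal J$ and $f,h$ are arbitrary composable morphisms. The sum $\mathcal J_1+\mathcal J_2$ is given by $(\mathcal J_1+\mathcal J_2)(A,B)=\mathcal J_1(A,B)+\mathcal J_2(A,B)$. An ideal $\mathcal J$ is preenveloping if for every object $B$ there is a morphism $j:B\to J$ in $\mathcal J$ such that every morphism $j':B\to J'$ in $\mathcal J$ factors as $j'=gj$ for some $g:J\to J'$ (such $j$ is a $\mathcal J$-preenvelope). Dually, $\mathcal I$ is precovering if every object $A$ admits $i:I\to A$ in $\mathcal I$ through which every morphism $I'\to A$ in $\mathcal I$ factors. *)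

theory Defs
  imports "HOL-Algebra.Group"
begin

text \<open>An additive category, presented concretely: a set of objects Ob, pairwise
disjoint hom-sets Hom A B, composition cmp g f (meaning g after f), identities,
an addition add on morphisms and zero morphisms zero A B making every hom-set an
abelian group, bilinear composition, a zero object and binary biproducts.\<close>

definition hom_group :: "('o \<Rightarrow> 'o \<Rightarrow> 'm set) \<Rightarrow> ('m \<Rightarrow> 'm \<Rightarrow> 'm) \<Rightarrow> ('o \<Rightarrow> 'o \<Rightarrow> 'm)
    \<Rightarrow> 'o \<Rightarrow> 'o \<Rightarrow> 'm monoid" where
  "hom_group Hom add zero A B = \<lparr>carrier = Hom A B, mult = add, one = zero A B\<rparr>"

definition category ::
  "'o set \<Rightarrow> ('o \<Rightarrow> 'o \<Rightarrow> 'm set) \<Rightarrow> ('m \<Rightarrow> 'm \<Rightarrow> 'm) \<Rightarrow> ('o \<Rightarrow> 'm) \<Rightarrow> bool" where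
  "category Ob Hom cmp ident \<longleftrightarrow>
     (\<forall>A\<in>Ob. \<forall>B\<in>Ob. \<forall>A'\<in>Ob. \<forall>B'\<in>Ob. (A, B) \<noteq> (A', B') \<longrightarrow> Hom A B \<inter> Hom A' B' = {}) \<and>
     (\<forall>A\<in>Ob. \<forall>B\<in>Ob. \<forall>C\<in>Ob. \<forall>f\<in>Hom A B. \<forall>g\<in>Hom B C. cmp g f \<in> Hom A C) \<and>
     (\<forall>A\<in>Ob. \<forall>B\<in>Ob. \<forall>C\<in>Ob. \<forall>D\<in>Ob. \<forall>f\<in>Hom A B. \<forall>g\<in>Hom B C. \<forall>h\<in>Hom C D.
        cmp h (cmp g f) = cmp (cmp h g) f) \<and>
     (\<forall>A\<in>Ob. ident A \<in> Hom A A) \<and>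
     (\<forall>A\<in>Ob. \<forall>B\<in>Ob. \<forall>f\<in>Hom A B. cmp (ident B) f = f \<and> cmp f (ident A) = f)"

definition preadditive_category ::
  "'o set \<Rightarrow> ('o \<Rightarrow> 'o \<Rightarrow> 'm set) \<Rightarrow> ('m \<Rightarrow> 'm \<Rightarrow> 'm) \<Rightarrow> ('o \<Rightarrow> 'm)
     \<Rightarrow> ('m \<Rightarrow> 'm \<Rightarrow> 'm) \<Rightarrow> ('o \<Rightarrow> 'o \<Rightarrow> 'm) \<Rightarrow> bool" where
  "preadditive_category Ob Hom cmp ident add zero \<longleftrightarrow>
     category Ob Hom cmp ident \<and>
     (\<forall>A\<in>Ob. \<forall>B\<in>Ob. comm_group (hom_group Hom add zero A B)) \<and>
     (\<forall>A\<in>Ob. \<forall>B\<in>Ob. \<forall>C\<in>Ob. \<forall>f\<in>Hom A B. \<forall>f'\<in>Hom A B. \<forall>g\<in>Hom B C. \<forall>g'\<in>Hom B C.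
        cmp g (add f f') = add (cmp g f) (cmp g f') \<and>
        cmp (add g g') f = add (cmp g f) (cmp g' f))"

definition additive_category ::
  "'o set \<Rightarrow> ('o \<Rightarrow> 'o \<Rightarrow> 'm set) \<Rightarrow> ('m \<Rightarrow> 'm \<Rightarrow> 'm) \<Rightarrow> ('o \<Rightarrow> 'm)
     \<Rightarrow> ('m \<Rightarrow> 'm \<Rightarrow> 'm) \<Rightarrow> ('o \<Rightarrow> 'o \<Rightarrow> 'm) \<Rightarrow> bool" where
  "additive_category Ob Hom cmp ident add zero \<longleftrightarrow>
     preadditive_category Ob Hom cmp ident add zero \<and>
     (\<exists>Z\<in>Ob. ident Z = zero Z Z) \<and>
     (\<forall>A\<in>Ob. \<forall>B\<in>Ob. \<exists>C\<in>Ob. \<exists>i1\<in>Hom A C. \<exists>i2\<in>Hom B C. \<exists>p1\<in>Hom C A. \<exists>p2\<in>Hom C B.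
        cmp p1 i1 = ident A \<and> cmp p2 i2 = ident B \<and>
        cmp p1 i2 = zero B A \<and> cmp p2 i1 = zero A B \<and>
        add (cmp i1 p1) (cmp i2 p2) = ident C)"

definition is_ideal ::
  "'o set \<Rightarrow> ('o \<Rightarrow> 'o \<Rightarrow> 'm set) \<Rightarrow> ('m \<Rightarrow> 'm \<Rightarrow> 'm) \<Rightarrow> ('m \<Rightarrow> 'm \<Rightarrow> 'm) \<Rightarrow> ('o \<Rightarrow> 'o \<Rightarrow> 'm)
     \<Rightarrow> ('o \<Rightarrow> 'o \<Rightarrow> 'm set) \<Rightarrow> bool" where
  "is_ideal Ob Hom cmp add zero J \<longleftrightarrow>
     (\<forall>A\<in>Ob. \<forall>B\<in>Ob. subgroup (J A B) (hom_group Hom add zero A B)) \<and>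
     (\<forall>A\<in>Ob. \<forall>B\<in>Ob. \<forall>C\<in>Ob. \<forall>D\<in>Ob. \<forall>h\<in>Hom A B. \<forall>g\<in>J B C. \<forall>f\<in>Hom C D.
        cmp f (cmp g h) \<in> J A D)"

definition ideal_sum ::
  "('m \<Rightarrow> 'm \<Rightarrow> 'm) \<Rightarrow> ('o \<Rightarrow> 'o \<Rightarrow> 'm set) \<Rightarrow> ('o \<Rightarrow> 'o \<Rightarrow> 'm set) \<Rightarrow> ('o \<Rightarrow> 'o \<Rightarrow> 'm set)" where
  "ideal_sum add J1 J2 = (\<lambda>A B. {add f g | f g. f \<in> J1 A B \<and> g \<in> J2 A B})"

definition preenveloping ::
  "'o set \<Rightarrow> ('o \<Rightarrow> 'o \<Rightarrow> 'm set) \<Rightarrow> ('m \<Rightarrow> 'm \<Rightarrow> 'm) \<Rightarrow> ('o \<Rightarrow> 'o \<Rightarrow> 'm set) \<Rightarrow> bool" where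
  "preenveloping Ob Hom cmp J \<longleftrightarrow>
     (\<forall>B\<in>Ob. \<exists>E\<in>Ob. \<exists>j\<in>J B E. \<forall>E'\<in>Ob. \<forall>j'\<in>J B E'. \<exists>g\<in>Hom E E'. j' = cmp g j)"

definition precovering ::
  "'o set \<Rightarrow> ('o \<Rightarrow> 'o \<Rightarrow> 'm set) \<Rightarrow> ('m \<Rightarrow> 'm \<Rightarrow> 'm) \<Rightarrow> ('o \<Rightarrow> 'o \<Rightarrow> 'm set) \<Rightarrow> bool" where
  "precovering Ob Hom cmp J \<longleftrightarrow>
     (\<forall>A\<in>Ob. \<exists>I\<in>Ob. \<exists>i\<in>J I A. \<forall>I'\<in>Ob. \<forall>i'\<in>J I' A. \<exists>g\<in>Hom I' I. i' = cmp i g)"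

end

theory Submission
  imports Defs
begin

locale addcat =
  fixes Ob :: "'o set" and Hom :: "'o \<Rightarrow> 'o \<Rightarrow> 'm set"
    and cmp :: "'m \<Rightarrow> 'm \<Rightarrow> 'm" and ident :: "'o \<Rightarrow> 'm"
    and add :: "'m \<Rightarrow> 'm \<Rightarrow> 'm" and zero :: "'o \<Rightarrow> 'o \<Rightarrow> 'm"
  assumes AC: "additive_category Ob Hom cmp ident add zero"
begin

lemma cat: "category Ob Hom cmp ident"
  using AC unfolding additive_category_def preadditive_category_def by blast

lemma cmp_in: "A \<in> Ob \<Longrightarrow> B \<in> Ob \<Longrightarrow> C \<in> Ob \<Longrightarrow> f \<in> Hom A B \<Longrightarrow> g \<in> Hom B C \<Longrightarrow> cmp g f \<in> Hom A C"
  using cat unfolding category_def by blast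

lemma cmp_assoc: "A \<in> Ob \<Longrightarrow> B \<in> Ob \<Longrightarrow> C \<in> Ob \<Longrightarrow> D \<in> Ob \<Longrightarrow> f \<in> Hom A B \<Longrightarrow> g \<in> Hom B C
  \<Longrightarrow> h \<in> Hom C D \<Longrightarrow> cmp h (cmp g f) = cmp (cmp h g) f"
  using cat unfolding category_def by blast

lemma id_in: "A \<in> Ob \<Longrightarrow> ident A \<in> Hom A A"
  using cat unfolding category_def by blast

lemma id_l: "A \<in> Ob \<Longrightarrow> B \<in> Ob \<Longrightarrow> f \<in> Hom A B \<Longrightarrow> cmp (ident B) f = f"
  using cat unfolding category_def by blast

lemma id_r: "A \<in> Ob \<Longrightarrow> B \<in> Ob \<Longrightarrow> f \<in> Hom A B \<Longrightarrow> cmp f (ident A) = f"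
  using cat unfolding category_def by blast

lemma grp: "A \<in> Ob \<Longrightarrow> B \<in> Ob \<Longrightarrow> comm_group (hom_group Hom add zero A B)"
  using AC unfolding additive_category_def preadditive_category_def by blast

lemma distl: "A \<in> Ob \<Longrightarrow> B \<in> Ob \<Longrightarrow> C \<in> Ob \<Longrightarrow> f \<in> Hom A B \<Longrightarrow> f' \<in> Hom A B \<Longrightarrow> g \<in> Hom B C
  \<Longrightarrow> cmp g (add f f') = add (cmp g f) (cmp g f')"
  using AC unfolding additive_category_def preadditive_category_def by blast

lemma distr: "A \<in> Ob \<Longrightarrow> B \<in> Ob \<Longrightarrow> C \<in> Ob \<Longrightarrow> f \<in> Hom A B \<Longrightarrow> g \<in> Hom B C \<Longrightarrow> g' \<in> Hom B C
  \<Longrightarrow> cmp (add g g') f = add (cmp g f) (cmp g' f)"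
  using AC unfolding additive_category_def preadditive_category_def by blast

lemma biprod: "A \<in> Ob \<Longrightarrow> B \<in> Ob \<Longrightarrow> \<exists>C\<in>Ob. \<exists>i1\<in>Hom A C. \<exists>i2\<in>Hom B C. \<exists>p1\<in>Hom C A. \<exists>p2\<in>Hom C B.
        cmp p1 i1 = ident A \<and> cmp p2 i2 = ident B \<and>
        cmp p1 i2 = zero B A \<and> cmp p2 i1 = zero A B \<and>
        add (cmp i1 p1) (cmp i2 p2) = ident C"
  using AC unfolding additive_category_def by blast

lemma add_in: "A \<in> Ob \<Longrightarrow> B \<in> Ob \<Longrightarrow> f \<in> Hom A B \<Longrightarrow> g \<in> Hom A B \<Longrightarrow> add f g \<in> Hom A B"
proof -
  assume a: "A \<in> Ob" "B \<in> Ob" "f \<in> Hom A B" "g \<in> Hom A B"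
  interpret G: comm_group "hom_group Hom add zero A B" using grp a by blast
  show ?thesis using G.m_closed[of f g] a by (simp add: hom_group_def)
qed

lemma zero_in: "A \<in> Ob \<Longrightarrow> B \<in> Ob \<Longrightarrow> zero A B \<in> Hom A B"
proof -
  assume a: "A \<in> Ob" "B \<in> Ob"
  interpret G: comm_group "hom_group Hom add zero A B" using grp a by blast
  show ?thesis using G.one_closed by (simp add: hom_group_def)
qed

lemma add_assoc: "A \<in> Ob \<Longrightarrow> B \<in> Ob \<Longrightarrow> f \<in> Hom A B \<Longrightarrow> g \<in> Hom A B \<Longrightarrow> h \<in> Hom A B
  \<Longrightarrow> add (add f g) h = add f (add g h)"
proof -
  assume a: "A \<in> Ob" "B \<in> Ob" "f \<in> Hom A B" "g \<in> Hom A B" "h \<in> Hom A B"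
  interpret G: comm_group "hom_group Hom add zero A B" using grp a by blast
  show ?thesis using G.m_assoc[of f g h] a by (simp add: hom_group_def)
qed

lemma add_comm: "A \<in> Ob \<Longrightarrow> B \<in> Ob \<Longrightarrow> f \<in> Hom A B \<Longrightarrow> g \<in> Hom A B \<Longrightarrow> add f g = add g f"
proof -
  assume a: "A \<in> Ob" "B \<in> Ob" "f \<in> Hom A B" "g \<in> Hom A B"
  interpret G: comm_group "hom_group Hom add zero A B" using grp a by blast
  show ?thesis using G.m_comm[of f g] a by (simp add: hom_group_def)
qed

lemma add_zero: "A \<in> Ob \<Longrightarrow> B \<in> Ob \<Longrightarrow> f \<in> Hom A B \<Longrightarrow> add f (zero A B) = f"
proof -
  assume a: "A \<in> Ob" "B \<in> Ob" "f \<in> Hom A B"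
  interpret G: comm_group "hom_group Hom add zero A B" using grp a by blast
  show ?thesis using G.r_one[of f] a by (simp add: hom_group_def)
qed

lemma zero_add: "A \<in> Ob \<Longrightarrow> B \<in> Ob \<Longrightarrow> f \<in> Hom A B \<Longrightarrow> add (zero A B) f = f"
proof -
  assume a: "A \<in> Ob" "B \<in> Ob" "f \<in> Hom A B"
  interpret G: comm_group "hom_group Hom add zero A B" using grp a by blast
  show ?thesis using G.l_one[of f] a by (simp add: hom_group_def)
qed

lemma idem_zero: "A \<in> Ob \<Longrightarrow> B \<in> Ob \<Longrightarrow> f \<in> Hom A B \<Longrightarrow> add f f = f \<Longrightarrow> f = zero A B"
proof -
  assume a: "A \<in> Ob" "B \<in> Ob" "f \<in> Hom A B" "add f f = f"
  interpret G: comm_group "hom_group Hom add zero A B" using grp a by blast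
  show ?thesis using G.l_cancel_one[of f f] a by (simp add: hom_group_def)
qed

lemma cmp_zero: "A \<in> Ob \<Longrightarrow> B \<in> Ob \<Longrightarrow> C \<in> Ob \<Longrightarrow> g \<in> Hom B C \<Longrightarrow> cmp g (zero A B) = zero A C"
proof -
  assume a: "A \<in> Ob" "B \<in> Ob" "C \<in> Ob" "g \<in> Hom B C"
  have z: "zero A B \<in> Hom A B" using zero_in a by blast
  have "cmp g (zero A B) = cmp g (add (zero A B) (zero A B))" using zero_add[OF _ _ z] a by simp
  also have "\<dots> = add (cmp g (zero A B)) (cmp g (zero A B))" using distl[OF _ _ _ z z] a by blast
  finally show ?thesis using idem_zero[of A C] cmp_in[OF _ _ _ z] a by metis
qed

lemma zero_cmp: "A \<in> Ob \<Longrightarrow> B \<in> Ob \<Longrightarrow> C \<in> Ob \<Longrightarrow> f \<in> Hom A B \<Longrightarrow> cmp (zero B C) f = zero A C"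
proof -
  assume a: "A \<in> Ob" "B \<in> Ob" "C \<in> Ob" "f \<in> Hom A B"
  have z: "zero B C \<in> Hom B C" using zero_in a by blast
  have "cmp (zero B C) f = cmp (add (zero B C) (zero B C)) f" using zero_add[OF _ _ z] a by simp
  also have "\<dots> = add (cmp (zero B C) f) (cmp (zero B C) f)" using distr[OF _ _ _ _ z z] a by blast
  finally show ?thesis using idem_zero[of A C] cmp_in[OF _ _ _ _ z] a by metis
qed


lemma ideal_sub: "is_ideal Ob Hom cmp add zero J \<Longrightarrow> A \<in> Ob \<Longrightarrow> B \<in> Ob \<Longrightarrow> f \<in> J A B \<Longrightarrow> f \<in> Hom A B"
  unfolding is_ideal_def using subgroup.subset[of "J A B" "hom_group Hom add zero A B"] by (auto simp: hom_group_def)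

lemma ideal_left: "is_ideal Ob Hom cmp add zero J \<Longrightarrow> A \<in> Ob \<Longrightarrow> B \<in> Ob \<Longrightarrow> C \<in> Ob
  \<Longrightarrow> j \<in> J A B \<Longrightarrow> i \<in> Hom B C \<Longrightarrow> cmp i j \<in> J A C"
proof -
  assume a: "is_ideal Ob Hom cmp add zero J" "A \<in> Ob" "B \<in> Ob" "C \<in> Ob" "j \<in> J A B" "i \<in> Hom B C"
  have "cmp i (cmp j (ident A)) \<in> J A C" using a id_in[of A] unfolding is_ideal_def by blast
  moreover have "j \<in> Hom A B" using ideal_sub a by blast
  ultimately show ?thesis using id_r a by simp
qed

lemma ideal_right: "is_ideal Ob Hom cmp add zero J \<Longrightarrow> A \<in> Ob \<Longrightarrow> B \<in> Ob \<Longrightarrow> C \<in> Ob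
  \<Longrightarrow> j \<in> J B C \<Longrightarrow> i \<in> Hom A B \<Longrightarrow> cmp j i \<in> J A C"
proof -
  assume a: "is_ideal Ob Hom cmp add zero J" "A \<in> Ob" "B \<in> Ob" "C \<in> Ob" "j \<in> J B C" "i \<in> Hom A B"
  have "cmp (ident C) (cmp j i) \<in> J A C" using a id_in[of C] unfolding is_ideal_def by blast
  moreover have "j \<in> Hom B C" using ideal_sub a by blast
  ultimately show ?thesis using id_l a cmp_in by simp
qed

lemma key:
  assumes ob: "X \<in> Ob" "Y1 \<in> Ob" "Y2 \<in> Ob" "C \<in> Ob" "Z \<in> Ob"
    and h: "i1 \<in> Hom Y1 C" "i2 \<in> Hom Y2 C" "p1 \<in> Hom C Y1" "p2 \<in> Hom C Y2"
    and e: "cmp p1 i1 = ident Y1" "cmp p2 i2 = ident Y2" "cmp p1 i2 = zero Y2 Y1" "cmp p2 i1 = zero Y1 Y2"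
    and u: "u1 \<in> Hom X Y1" "u2 \<in> Hom X Y2" "v1 \<in> Hom Y1 Z" "v2 \<in> Hom Y2 Z"
  shows "cmp (add (cmp v1 p1) (cmp v2 p2)) (add (cmp i1 u1) (cmp i2 u2)) = add (cmp v1 u1) (cmp v2 u2)"
proof -
  have m: "cmp v1 p1 \<in> Hom C Z" "cmp v2 p2 \<in> Hom C Z" "cmp i1 u1 \<in> Hom X C" "cmp i2 u2 \<in> Hom X C"
    "cmp v1 u1 \<in> Hom X Z" "cmp v2 u2 \<in> Hom X Z"
    using cmp_in ob h u by blast+
  have j: "add (cmp i1 u1) (cmp i2 u2) \<in> Hom X C" using add_in m ob by blast
  have s1: "cmp (add (cmp v1 p1) (cmp v2 p2)) (add (cmp i1 u1) (cmp i2 u2))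
     = add (cmp (cmp v1 p1) (add (cmp i1 u1) (cmp i2 u2))) (cmp (cmp v2 p2) (add (cmp i1 u1) (cmp i2 u2)))"
    using distr[OF _ _ _ j m(1) m(2)] ob by blast
  have gen: "cmp (cmp v p) (cmp i w) = cmp (cmp v (cmp p i)) w"
    if "Y \<in> Ob" "Y' \<in> Ob" "v \<in> Hom Y Z" "p \<in> Hom C Y" "i \<in> Hom Y' C" "w \<in> Hom X Y'" for v p i w Y Y'
  proof -
    have "cmp (cmp v p) (cmp i w) = cmp (cmp (cmp v p) i) w"
      using cmp_assoc[of X Y' C Z w i "cmp v p"] that ob cmp_in by blast
    also have "cmp (cmp v p) i = cmp v (cmp p i)"
      using cmp_assoc[of Y' C Y Z i p v] that ob by simp
    finally show ?thesis .
  qed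
  have a11: "cmp (cmp v1 p1) (cmp i1 u1) = cmp v1 u1"
    using gen[of Y1 Y1 v1 p1 i1 u1] ob h u e id_r by simp
  have a22: "cmp (cmp v2 p2) (cmp i2 u2) = cmp v2 u2"
    using gen[of Y2 Y2 v2 p2 i2 u2] ob h u e id_r by simp
  have a12: "cmp (cmp v1 p1) (cmp i2 u2) = zero X Z"
    using gen[of Y1 Y2 v1 p1 i2 u2] ob h u e cmp_zero zero_cmp by simp
  have a21: "cmp (cmp v2 p2) (cmp i1 u1) = zero X Z"
    using gen[of Y2 Y1 v2 p2 i1 u1] ob h u e cmp_zero zero_cmp by simp
  have "cmp (cmp v1 p1) (add (cmp i1 u1) (cmp i2 u2)) = cmp v1 u1"
    using distl[OF _ _ _ m(3) m(4) m(1)] ob a11 a12 add_zero m by simp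
  moreover have "cmp (cmp v2 p2) (add (cmp i1 u1) (cmp i2 u2)) = cmp v2 u2"
    using distl[OF _ _ _ m(3) m(4) m(2)] ob a21 a22 zero_add m by simp
  ultimately show ?thesis using s1 by simp
qed

lemma sum_in: "is_ideal Ob Hom cmp add zero J1 \<Longrightarrow> is_ideal Ob Hom cmp add zero J2 \<Longrightarrow>
   a \<in> J1 A B \<Longrightarrow> b \<in> J2 A B \<Longrightarrow> add a b \<in> ideal_sum add J1 J2 A B"
  unfolding ideal_sum_def by blast

lemma preenv:
  assumes I1: "is_ideal Ob Hom cmp add zero J1" and I2: "is_ideal Ob Hom cmp add zero J2"
    and P1: "preenveloping Ob Hom cmp J1" and P2: "preenveloping Ob Hom cmp J2"
  shows "preenveloping Ob Hom cmp (ideal_sum add J1 J2)"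
  unfolding preenveloping_def
proof
  fix B assume B: "B \<in> Ob"
  obtain E1 j1 where E1: "E1 \<in> Ob" "j1 \<in> J1 B E1" and U1: "\<forall>E'\<in>Ob. \<forall>j'\<in>J1 B E'. \<exists>g\<in>Hom E1 E'. j' = cmp g j1"
    using P1 B unfolding preenveloping_def by blast
  obtain E2 j2 where E2: "E2 \<in> Ob" "j2 \<in> J2 B E2" and U2: "\<forall>E'\<in>Ob. \<forall>j'\<in>J2 B E'. \<exists>g\<in>Hom E2 E'. j' = cmp g j2"
    using P2 B unfolding preenveloping_def by blast
  obtain C i1 i2 p1 p2 where C: "C \<in> Ob" and h: "i1 \<in> Hom E1 C" "i2 \<in> Hom E2 C" "p1 \<in> Hom C E1" "p2 \<in> Hom C E2"
    and e: "cmp p1 i1 = ident E1" "cmp p2 i2 = ident E2" "cmp p1 i2 = zero E2 E1" "cmp p2 i1 = zero E1 E2"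
    using biprod[OF E1(1) E2(1)] by blast
  have jm: "j1 \<in> Hom B E1" "j2 \<in> Hom B E2" using ideal_sub I1 I2 E1 E2 B by blast+
  show "\<exists>E\<in>Ob. \<exists>j\<in>ideal_sum add J1 J2 B E. \<forall>E'\<in>Ob. \<forall>j'\<in>ideal_sum add J1 J2 B E'. \<exists>g\<in>Hom E E'. j' = cmp g j"
  proof (rule bexI[of _ C], rule bexI[of _ "add (cmp i1 j1) (cmp i2 j2)"])
    show "add (cmp i1 j1) (cmp i2 j2) \<in> ideal_sum add J1 J2 B C"
      using sum_in[OF I1 I2 ideal_left[OF I1 B E1(1) C E1(2) h(1)] ideal_left[OF I2 B E2(1) C E2(2) h(2)]] .
  next
    show "\<forall>E'\<in>Ob. \<forall>j'\<in>ideal_sum add J1 J2 B E'. \<exists>g\<in>Hom C E'. j' = cmp g (add (cmp i1 j1) (cmp i2 j2))"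
    proof (intro ballI)
    fix E' j' assume E': "E' \<in> Ob" and j': "j' \<in> ideal_sum add J1 J2 B E'"
    obtain a b where ab: "j' = add a b" "a \<in> J1 B E'" "b \<in> J2 B E'" using j' unfolding ideal_sum_def by blast
    obtain g1 where g1: "g1 \<in> Hom E1 E'" "a = cmp g1 j1" using U1 E' ab by blast
    obtain g2 where g2: "g2 \<in> Hom E2 E'" "b = cmp g2 j2" using U2 E' ab by blast
    show "\<exists>g\<in>Hom C E'. j' = cmp g (add (cmp i1 j1) (cmp i2 j2))"
    proof (rule bexI[of _ "add (cmp g1 p1) (cmp g2 p2)"])
    show "add (cmp g1 p1) (cmp g2 p2) \<in> Hom C E'" using add_in cmp_in C E' E1 E2 h g1 g2 by meson
    show "j' = cmp (add (cmp g1 p1) (cmp g2 p2)) (add (cmp i1 j1) (cmp i2 j2))"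
      using key[OF B E1(1) E2(1) C E' h e jm g1(1) g2(1)] ab g1 g2 by simp
    qed
    qed
  qed (rule C)
qed

lemma precov:
  assumes I1: "is_ideal Ob Hom cmp add zero J1" and I2: "is_ideal Ob Hom cmp add zero J2"
    and P1: "precovering Ob Hom cmp J1" and P2: "precovering Ob Hom cmp J2"
  shows "precovering Ob Hom cmp (ideal_sum add J1 J2)"
  unfolding precovering_def
proof
  fix A assume A: "A \<in> Ob"
  obtain E1 j1 where E1: "E1 \<in> Ob" "j1 \<in> J1 E1 A" and U1: "\<forall>E'\<in>Ob. \<forall>j'\<in>J1 E' A. \<exists>g\<in>Hom E' E1. j' = cmp j1 g"
    using P1 A unfolding precovering_def by blast
  obtain E2 j2 where E2: "E2 \<in> Ob" "j2 \<in> J2 E2 A" and U2: "\<forall>E'\<in>Ob. \<forall>j'\<in>J2 E' A. \<exists>g\<in>Hom E' E2. j' = cmp j2 g"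
    using P2 A unfolding precovering_def by blast
  obtain C i1 i2 p1 p2 where C: "C \<in> Ob" and h: "i1 \<in> Hom E1 C" "i2 \<in> Hom E2 C" "p1 \<in> Hom C E1" "p2 \<in> Hom C E2"
    and e: "cmp p1 i1 = ident E1" "cmp p2 i2 = ident E2" "cmp p1 i2 = zero E2 E1" "cmp p2 i1 = zero E1 E2"
    using biprod[OF E1(1) E2(1)] by blast
  have jm: "j1 \<in> Hom E1 A" "j2 \<in> Hom E2 A" using ideal_sub I1 I2 E1 E2 A by blast+
  show "\<exists>I\<in>Ob. \<exists>i\<in>ideal_sum add J1 J2 I A. \<forall>I'\<in>Ob. \<forall>i'\<in>ideal_sum add J1 J2 I' A. \<exists>g\<in>Hom I' I. i' = cmp i g"
  proof (rule bexI[of _ C], rule bexI[of _ "add (cmp j1 p1) (cmp j2 p2)"])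
    show "add (cmp j1 p1) (cmp j2 p2) \<in> ideal_sum add J1 J2 C A"
      using sum_in[OF I1 I2 ideal_right[OF I1 C E1(1) A E1(2) h(3)] ideal_right[OF I2 C E2(1) A E2(2) h(4)]] .
  next
    show "\<forall>E'\<in>Ob. \<forall>j'\<in>ideal_sum add J1 J2 E' A. \<exists>g\<in>Hom E' C. j' = cmp (add (cmp j1 p1) (cmp j2 p2)) g"
    proof (intro ballI)
    fix E' j' assume E': "E' \<in> Ob" and j': "j' \<in> ideal_sum add J1 J2 E' A"
    obtain a b where ab: "j' = add a b" "a \<in> J1 E' A" "b \<in> J2 E' A" using j' unfolding ideal_sum_def by blast
    obtain g1 where g1: "g1 \<in> Hom E' E1" "a = cmp j1 g1" using U1 E' ab by blast
    obtain g2 where g2: "g2 \<in> Hom E' E2" "b = cmp j2 g2" using U2 E' ab by blast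
    show "\<exists>g\<in>Hom E' C. j' = cmp (add (cmp j1 p1) (cmp j2 p2)) g"
    proof (rule bexI[of _ "add (cmp i1 g1) (cmp i2 g2)"])
    show "add (cmp i1 g1) (cmp i2 g2) \<in> Hom E' C" using add_in cmp_in C E' E1 E2 h g1 g2 by meson
    show "j' = cmp (add (cmp j1 p1) (cmp j2 p2)) (add (cmp i1 g1) (cmp i2 g2))"
      using key[OF E' E1(1) E2(1) C A h e g1(1) g2(1) jm] ab g1 g2 by simp
    qed
    qed
  qed (rule C)
qed

end

theorem proposition2p1:
  fixes Ob :: "'o set" and Hom :: "'o \<Rightarrow> 'o \<Rightarrow> 'm set"
    and cmp :: "'m \<Rightarrow> 'm \<Rightarrow> 'm" and ident :: "'o \<Rightarrow> 'm"
    and add :: "'m \<Rightarrow> 'm \<Rightarrow> 'm" and zero :: "'o \<Rightarrow> 'o \<Rightarrow> 'm"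
    and J1 J2 :: "'o \<Rightarrow> 'o \<Rightarrow> 'm set"
  assumes "additive_category Ob Hom cmp ident add zero"
    and "is_ideal Ob Hom cmp add zero J1"
    and "is_ideal Ob Hom cmp add zero J2"
  shows "(preenveloping Ob Hom cmp J1 \<and> preenveloping Ob Hom cmp J2
            \<longrightarrow> preenveloping Ob Hom cmp (ideal_sum add J1 J2))
       \<and> (precovering Ob Hom cmp J1 \<and> precovering Ob Hom cmp J2
            \<longrightarrow> precovering Ob Hom cmp (ideal_sum add J1 J2))"
proof -
  interpret addcat Ob Hom cmp ident add zero using assms(1) by (unfold_locales)
  show ?thesis using preenv[OF assms(2,3)] precov[OF assms(2,3)] by blast
qed

end
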